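(* Let $\{X_i\mid i\in I\}$ be a family of $T_0$-spaces. If the product space $\prod_{i\in I}X_i$ is a $d^{\ast}$-space, then each $X_i$ is a $d^{\ast}$-space.
   Context: All spaces are $T_0$. The specialization order of a space $X$ is given by $x\le y$ iff $x\in cl(\{y\})$; ${\uparrow}$ is taken with respect to it. A $T_0$-space $X$ is a $d^{\ast}$-space if for every directed $D\subseteq X$ (in the specialization order), every $x\in X$ and every nonempty open $U\subseteq X$, $\bigcap_{d\in D}{\uparrow}d\cap{\uparrow}x\subseteq U$ implies ${\uparrow}d\cap{\uparrow}x\subseteq U$ for some $d\in D$. *)

theory Defs
  imports "HOL-Analysis.Analysis"
begin

definition spec_le :: "'a topology \<Rightarrow> 'a \<Rightarrow> 'a \<Rightarrow> bool" where
  "spec_le X x y \<longleftrightarrow> x \<in> topspace X \<and> y \<in> topspace X \<and> x \<in> X closure_of {y}"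

definition upset :: "'a topology \<Rightarrow> 'a \<Rightarrow> 'a set" where
  "upset X x = {y \<in> topspace X. spec_le X x y}"

definition directed_in :: "'a topology \<Rightarrow> 'a set \<Rightarrow> bool" where
  "directed_in X D \<longleftrightarrow> D \<subseteq> topspace X \<and> D \<noteq> {} \<and>
     (\<forall>a\<in>D. \<forall>b\<in>D. \<exists>c\<in>D. spec_le X a c \<and> spec_le X b c)"

definition dstar_space :: "'a topology \<Rightarrow> bool" where
  "dstar_space X \<longleftrightarrow> t0_space X \<and>
     (\<forall>D x U. directed_in X D \<and> x \<in> topspace X \<and> openin X U \<and> U \<noteq> {} \<and>
        (\<Inter>d\<in>D. upset X d) \<inter> upset X x \<subseteq> U
        \<longrightarrow> (\<exists>d\<in>D. upset X d \<inter> upset X x \<subseteq> U))"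

end

theory Submission
  imports Defs
begin

lemma spec_le_product:
  assumes "f \<in> topspace (product_topology X I)" "g \<in> topspace (product_topology X I)"
  shows "spec_le (product_topology X I) f g \<longleftrightarrow> (\<forall>i\<in>I. spec_le (X i) (f i) (g i))"
proof -
  have g: "{g} = PiE I (\<lambda>i. {g i})"
    using assms(2) by (auto simp: PiE_iff extensional_def fun_eq_iff) metis
  have c: "(product_topology X I) closure_of {g} = PiE I (\<lambda>i. (X i) closure_of {g i})"
    by (subst g) (rule closure_of_product_topology)
  show ?thesis using assms unfolding spec_le_def c
    by (auto simp: PiE_iff)
qed

lemma spec_le_refl: "x \<in> topspace X \<Longrightarrow> spec_le X x x"
  unfolding spec_le_def by (meson closure_of_subset empty_subsetI insert_subset singletonI subsetD)

theorem mainTheorem3: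
  fixes X :: "'i \<Rightarrow> 'a topology" and I :: "'i set"
  assumes "\<And>i. i \<in> I \<Longrightarrow> t0_space (X i)"
    and "\<And>i. i \<in> I \<Longrightarrow> topspace (X i) \<noteq> {}"
    and "dstar_space (product_topology X I)"
  shows "\<forall>i\<in>I. dstar_space (X i)"
proof
  fix k assume k: "k \<in> I"
  define P where "P = product_topology X I"
  define z where "z = (\<lambda>i. if i \<in> I then (SOME a. a \<in> topspace (X i)) else undefined)"
  have z: "z \<in> topspace P"
    unfolding P_def z_def using assms(2) by (auto simp: PiE_iff some_in_eq extensional_def)
  define e where "e = (\<lambda>a. z(k := a))"
  have e: "e a \<in> topspace P" if "a \<in> topspace (X k)" for a
    using z that k unfolding e_def P_def by (auto simp: PiE_iff extensional_def)
  have eg: "spec_le P (e a) g \<longleftrightarrow> spec_le (X k) a (g k) \<and> (\<forall>i\<in>I-{k}. spec_le (X i) (z i) (g i))"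
    if "a \<in> topspace (X k)" "g \<in> topspace P" for a g
    using spec_le_product[of "e a" X I g] e[OF that(1)] that(2) k unfolding P_def e_def
    by auto
  have zz: "\<forall>i\<in>I. spec_le (X i) (z i) (z i)"
    using z unfolding P_def by (auto intro: spec_le_refl simp: PiE_iff)
  have ee: "spec_le P (e a) (e c) \<longleftrightarrow> spec_le (X k) a c"
    if "a \<in> topspace (X k)" "c \<in> topspace (X k)" for a c
    using eg[OF that(1) e[OF that(2)]] zz unfolding e_def by auto
  have ek: "e a k = a" for a unfolding e_def by simp
  have ds: "\<And>D x U. directed_in P D \<Longrightarrow> x \<in> topspace P \<Longrightarrow> openin P U \<Longrightarrow> U \<noteq> {} \<Longrightarrow>
        (\<Inter>d\<in>D. upset P d) \<inter> upset P x \<subseteq> U \<Longrightarrow> (\<exists>d\<in>D. upset P d \<inter> upset P x \<subseteq> U)"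
    using assms(3) unfolding dstar_space_def P_def by blast
  show "dstar_space (X k)"
    unfolding dstar_space_def
  proof (intro conjI allI impI)
    show "t0_space (X k)" using assms(1) k by blast
    fix D x U
    assume H: "directed_in (X k) D \<and> x \<in> topspace (X k) \<and> openin (X k) U \<and> U \<noteq> {} \<and>
        (\<Inter>d\<in>D. upset (X k) d) \<inter> upset (X k) x \<subseteq> U"
    hence DX: "D \<subseteq> topspace (X k)" and Dne: "D \<noteq> {}" and x: "x \<in> topspace (X k)"
      and U: "openin (X k) U" "U \<noteq> {}" and sub: "(\<Inter>d\<in>D. upset (X k) d) \<inter> upset (X k) x \<subseteq> U"
      and dir: "\<forall>a\<in>D. \<forall>b\<in>D. \<exists>c\<in>D. spec_le (X k) a c \<and> spec_le (X k) b c"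
      unfolding directed_in_def by auto
    define U' where "U' = {g \<in> topspace P. g k \<in> U}"
    have oU': "openin P U'" unfolding U'_def P_def
      by (rule openin_continuous_map_preimage[OF continuous_map_product_projection[of k I X, OF k] U(1)])
    obtain u where u: "u \<in> U" using U(2) by blast
    have "u \<in> topspace (X k)" using u U(1) openin_subset by blast
    hence "e u \<in> U'" unfolding U'_def using e ek u by auto
    hence U'ne: "U' \<noteq> {}" by blast
    have dirP: "directed_in P (e ` D)"
      unfolding directed_in_def
    proof (intro conjI ballI)
      show "e ` D \<subseteq> topspace P" using e DX by blast
      show "e ` D \<noteq> {}" using Dne by blast
    next
      fix a' b' assume "a' \<in> e ` D" "b' \<in> e ` D"
      then obtain a b where ab: "a \<in> D" "b \<in> D" "a' = e a" "b' = e b" by blast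
      then obtain c where "c \<in> D" "spec_le (X k) a c" "spec_le (X k) b c" using dir by blast
      thus "\<exists>c'\<in>e ` D. spec_le P a' c' \<and> spec_le P b' c'"
        using ab ee DX by blast
    qed
    have subP: "(\<Inter>d\<in>e ` D. upset P d) \<inter> upset P (e x) \<subseteq> U'"
    proof
      fix g assume g: "g \<in> (\<Inter>d\<in>e ` D. upset P d) \<inter> upset P (e x)"
      hence gP: "g \<in> topspace P" unfolding upset_def by auto
      have gk: "g k \<in> topspace (X k)" using gP k unfolding P_def by (auto simp: PiE_iff)
      have "g k \<in> upset (X k) x" using g eg[OF x gP] gk unfolding upset_def by auto
      moreover have "g k \<in> upset (X k) d" if "d \<in> D" for d
        using g that eg[OF _ gP, of d] DX gk unfolding upset_def by auto
      ultimately have "g k \<in> U" using sub by auto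
      thus "g \<in> U'" using gP unfolding U'_def by auto
    qed
    obtain d' where d': "d' \<in> e ` D" "upset P d' \<inter> upset P (e x) \<subseteq> U'"
      using ds[OF dirP e[OF x] oU' U'ne subP] by blast
    then obtain d where d: "d \<in> D" "d' = e d" by blast
    have "upset (X k) d \<inter> upset (X k) x \<subseteq> U"
    proof
      fix y assume y: "y \<in> upset (X k) d \<inter> upset (X k) x"
      hence yk: "y \<in> topspace (X k)" unfolding upset_def by auto
      have "e y \<in> upset P d' \<inter> upset P (e x)"
        using y d ee[OF _ yk] x DX e[OF yk] unfolding upset_def by auto
      hence "e y \<in> U'" using d' by blast
      thus "y \<in> U" unfolding U'_def using ek by auto
    qed
    thus "\<exists>d\<in>D. upset (X k) d \<inter> upset (X k) x \<subseteq> U" using d by blast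
  qed
qed

end
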